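(* Let $m<n$ and $1\le k\le n$. Then $$\chi(X(k,n,m))=\sum_{k_1+k_2=k}t^{k_2(m-k_1)+\frac12k_2(n-m-k_2)}\chi_{\Lambda^{k_2}(\mathbb{C}^{n-m})}(t^{\rho_{n-m}})\,\chi(X^\vee(k_1,n,m)),$$ where terms involving empty spaces are omitted.
   Context: For a $k$-dimensional space $K$: $X(k,n,m)=\{(I,J)\in\mathrm{Hom}(\mathbb{C}^m_x,K)\oplus\mathrm{Hom}^{\mathrm{st}}(K,\mathbb{C}^n_y)\}/GL(K)$ with $J$ injective, and $X^\vee(k_1,n,m)$ is defined the same way with $\dim K=k_1$ but with the stability on $I$ (i.e. $I:\mathbb{C}^m_x\to K$ surjective, $J$ arbitrary). $\chi(Y)=\chi(Y,\sum_i(-t)^i\Omega^i_Y)$ is the Hirzebruch genus, equivariant for $\mathbb{C}^\times_q\times T_x\times T_y$ ($T_x\subset GL_m$, $T_y\subset GL_n$ maximal tori), defined by localization as a rational function; $\mathbb{C}^\times_q$ scales $\mathrm{Hom}(\mathbb{C}^m_x,K)$ with weight $+1$ and acts trivially on $\mathrm{Hom}(K,\mathbb{C}^n_y)$. $\rho_N=\mathrm{diag}(\frac{N-1}{2},\dots,\frac{1-N}{2})$ and $\chi_{\Lambda^{j}(\mathbb{C}^N)}(t^{\rho_N})$ is the character of $\Lambda^j(\mathbb{C}^N)$ at $\mathrm{diag}(t^{(N-1)/2},\dots,t^{(1-N)/2})$. *)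

theory Defs
  imports "HOL-Analysis.Analysis" "HOL-Library.Multiset"
begin

text \<open>Equivariant Hirzebruch genus chi(Y, sum_i (-t)^i Omega^i_Y), defined by localization:
  each isolated fixed point p with tangent weights W p contributes
  prod over w in W p of (1 - t w^{-1}) / (1 - w^{-1}).  Equivariant parameters are evaluated
  at generic complex numbers: q (for C^x_q), x a (a < m, for T_x), y j (j < n, for T_y).\<close>

definition hirz_factor :: "complex \<Rightarrow> complex \<Rightarrow> complex" where
  "hirz_factor t w = (1 - t / w) / (1 - 1 / w)"

definition loc_genus :: "complex \<Rightarrow> 'p set \<Rightarrow> ('p \<Rightarrow> complex multiset) \<Rightarrow> complex" where
  "loc_genus t P W = (\<Sum>p\<in>P. prod_mset (image_mset (hirz_factor t) (W p)))"

text \<open>X(k,n,m): J injective, so X is the bundle Hom(C^m, K) over Gr(k,n).  Fixed points are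
  coordinate subspaces K = span(e_i, i in S), S subset of {..<n} with card S = k (and I = 0).
  Tangent weights: Hom(K, C^n/K) gives y j / y i (i in S, j not in S);
  Hom(C^m_x, K) gives q * y i / x a (i in S, a < m).\<close>

definition fixX :: "nat \<Rightarrow> nat \<Rightarrow> nat set set" where
  "fixX k n = {S. S \<subseteq> {..<n} \<and> card S = k}"

definition tangX :: "nat \<Rightarrow> nat \<Rightarrow> complex \<Rightarrow> (nat \<Rightarrow> complex) \<Rightarrow> (nat \<Rightarrow> complex)
    \<Rightarrow> nat set \<Rightarrow> complex multiset" where
  "tangX n m q x y S =
     image_mset (\<lambda>(i, j). y j / y i) (mset_set (S \<times> ({..<n} - S)))
   + image_mset (\<lambda>(i, a). q * y i / x a) (mset_set (S \<times> {..<m}))"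

definition chiX :: "nat \<Rightarrow> nat \<Rightarrow> nat \<Rightarrow> complex \<Rightarrow> complex \<Rightarrow> (nat \<Rightarrow> complex)
    \<Rightarrow> (nat \<Rightarrow> complex) \<Rightarrow> complex" where
  "chiX k n m t q x y = loc_genus t (fixX k n) (tangX n m q x y)"

text \<open>X^vee(k1,n,m): I surjective, so X^vee is the bundle Hom(K, C^n) over the Grassmannian of
  k1-dimensional quotients K of C^m.  Fixed points: ker I = span(e_b, b not in S),
  S subset of {..<m}, card S = k1; K then carries weights x a / q (a in S).
  Tangent weights: Hom(ker I, K) gives x a / x b (a in S, b < m not in S);
  Hom(K, C^n_y) gives q * y j / x a (a in S, j < n).\<close>

definition fixXv :: "nat \<Rightarrow> nat \<Rightarrow> nat set set" where
  "fixXv k1 m = {S. S \<subseteq> {..<m} \<and> card S = k1}"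

definition tangXv :: "nat \<Rightarrow> nat \<Rightarrow> complex \<Rightarrow> (nat \<Rightarrow> complex) \<Rightarrow> (nat \<Rightarrow> complex)
    \<Rightarrow> nat set \<Rightarrow> complex multiset" where
  "tangXv n m q x y S =
     image_mset (\<lambda>(a, b). x a / x b) (mset_set (S \<times> ({..<m} - S)))
   + image_mset (\<lambda>(a, j). q * y j / x a) (mset_set (S \<times> {..<n}))"

definition chiXv :: "nat \<Rightarrow> nat \<Rightarrow> nat \<Rightarrow> complex \<Rightarrow> complex \<Rightarrow> (nat \<Rightarrow> complex)
    \<Rightarrow> (nat \<Rightarrow> complex) \<Rightarrow> complex" where
  "chiXv k1 n m t q x y = loc_genus t (fixXv k1 m) (tangXv n m q x y)"

text \<open>Character of Lambda^j(C^N) at diag(t^((N-1)/2), ..., t^((1-N)/2)), where s = t^(1/2):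
  the i-th diagonal entry (i < N) is s powi (N - 1 - 2 i).\<close>

definition char_wedge_rho :: "nat \<Rightarrow> nat \<Rightarrow> complex \<Rightarrow> complex" where
  "char_wedge_rho j N s =
     (\<Sum>A\<in>{A. A \<subseteq> {..<N} \<and> card A = j}. \<Prod>i\<in>A. s powi (int N - 1 - 2 * int i))"

text \<open>Genericity of the evaluation point (all tangent weights at all fixed points are \<noteq> 0, 1).\<close>

definition generic_point :: "nat \<Rightarrow> nat \<Rightarrow> complex \<Rightarrow> (nat \<Rightarrow> complex) \<Rightarrow> (nat \<Rightarrow> complex) \<Rightarrow> bool" where
  "generic_point n m q x y \<longleftrightarrow> q \<noteq> 0 \<and> (\<forall>a<m. x a \<noteq> 0) \<and> (\<forall>j<n. y j \<noteq> 0)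
     \<and> inj_on x {..<m} \<and> inj_on y {..<n} \<and> (\<forall>a<m. \<forall>j<n. q * y j \<noteq> x a)"

end

theory Submission
  imports Defs "HOL-Complex_Analysis.Complex_Analysis"
begin


lemma vanish_lemma:
  fixes D :: "complex \<Rightarrow> complex"
  assumes P: "finite P" and hol: "D holomorphic_on (UNIV - P)"
    and lim: "(D \<longlongrightarrow> l) at_infinity"
    and res: "\<And>c. c \<in> P \<Longrightarrow> \<exists>H. H holomorphic_on (UNIV - (P - {c})) \<and> H c = 0 \<and>
                 (\<forall>u. u \<notin> P \<longrightarrow> (u - c) * D u = H u)"
    and u: "u \<notin> P"
  shows "D u = l"
proof -
  have bo: "D \<in> O[at c](\<lambda>_. 1)" if c: "c \<in> P" for c
  proof -
    obtain H where H: "H holomorphic_on (UNIV - (P - {c}))" "H c = 0"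
      "\<And>u. u \<notin> P \<Longrightarrow> (u - c) * D u = H u" using res[OF c] by blast
    have opn: "open (UNIV - (P - {c}))" using P by (simp add: open_Diff finite_imp_closed)
    have "H field_differentiable at c"
      using H(1) opn holomorphic_on_imp_differentiable_at by blast
    then obtain H' where "(H has_field_derivative H') (at c)"
      by (auto simp: field_differentiable_def)
    hence t: "((\<lambda>y. (H y - H c) / (y - c)) \<longlongrightarrow> H') (at c)"
      by (simp add: has_field_derivative_iff)
    have ev: "eventually (\<lambda>y. y \<notin> P) (at c)"
    proof -
      have "eventually (\<lambda>y. y \<in> (UNIV - (P - {c})) - {c}) (at c)"
        using opn by (intro eventually_at_in_open) auto
      thus ?thesis by eventually_elim auto
    qed
    have "eventually (\<lambda>y. (H y - H c) / (y - c) = D y) (at c)"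
      using ev
    proof eventually_elim
      case (elim y)
      hence "y \<noteq> c" using c by auto
      thus ?case using H(2) H(3)[OF elim] by (simp add: field_simps)
    qed
    hence "(D \<longlongrightarrow> H') (at c)" using t Lim_transform_eventually by blast
    thus ?thesis by (intro bigoI_tendsto[where c = H']) auto
  qed
  obtain g where g: "g holomorphic_on UNIV" "\<forall>z\<in>UNIV - P. g z = D z"
    using removable_singularities[of P UNIV D] P hol bo by auto
  have "eventually (\<lambda>z. z \<notin> P) at_infinity"
  proof -
    obtain B where "\<forall>z\<in>P. norm z \<le> B" using P finite_imp_bounded bounded_iff by blast
    thus ?thesis unfolding eventually_at_infinity
      by (intro exI[of _ "B+1"]) force
  qed
  hence "eventually (\<lambda>z. D z = g z) at_infinity" by eventually_elim (use g in auto)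
  hence "(g \<longlongrightarrow> l) at_infinity" using lim Lim_transform_eventually by blast
  hence "g u = l" using Liouville_weak g(1) by blast
  thus ?thesis using g u by auto
qed



definition hf :: "complex \<Rightarrow> complex \<Rightarrow> complex \<Rightarrow> complex" where
  "hf t a b = (a - t*b) / (a - b)"
definition sub :: "nat set \<Rightarrow> nat \<Rightarrow> nat set set" where
  "sub F k = {S. S \<subseteq> F \<and> card S = k}"
definition lt :: "complex \<Rightarrow> complex \<Rightarrow> (nat \<Rightarrow> complex) \<Rightarrow> (nat \<Rightarrow> complex) \<Rightarrow> nat set \<Rightarrow> nat set \<Rightarrow> nat set \<Rightarrow> complex" where
  "lt t q x y N M S = (\<Prod>i\<in>S. \<Prod>j\<in>N-S. hf t (y j) (y i)) * (\<Prod>i\<in>S. \<Prod>a\<in>M. hf t (q * y i) (x a))"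
definition Lc where "Lc t q x y N M k = (\<Sum>S\<in>sub N k. lt t q x y N M S)"
definition rt :: "complex \<Rightarrow> complex \<Rightarrow> (nat \<Rightarrow> complex) \<Rightarrow> (nat \<Rightarrow> complex) \<Rightarrow> nat set \<Rightarrow> nat set \<Rightarrow> nat set \<Rightarrow> complex" where
  "rt t q x y N M T = (\<Prod>a\<in>T. \<Prod>b\<in>M-T. hf t (x a) (x b)) * (\<Prod>a\<in>T. \<Prod>j\<in>N. hf t (q * y j) (x a))"
definition Rc where "Rc t q x y N M k = (\<Sum>T\<in>sub M k. rt t q x y N M T)"

lemma finite_sub: "finite F \<Longrightarrow> finite (sub F k)"
  unfolding sub_def by (rule finite_subset[of _ "Pow F"]) auto

lemma sub_0: "finite F \<Longrightarrow> sub F 0 = {{}}"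
  unfolding sub_def using finite_subset by (fastforce simp: card_eq_0_iff)

lemma sub_split:
  assumes F: "finite F" and p: "p \<notin> F"
  shows "sum f (sub (insert p F) k) =
     sum f (sub F k) + (if k = 0 then 0 else sum (\<lambda>S. f (insert p S)) (sub F (k - 1)))"
proof (cases k)
  case 0
  thus ?thesis using F by (simp add: sub_0)
next
  case (Suc k')
  have eq: "sub (insert p F) k = sub F k \<union> insert p ` sub F k'"
  proof
    show "sub (insert p F) k \<subseteq> sub F k \<union> insert p ` sub F k'"
    proof
      fix S assume S: "S \<in> sub (insert p F) k"
      show "S \<in> sub F k \<union> insert p ` sub F k'"
      proof (cases "p \<in> S")
        case True
        have "S - {p} \<in> sub F k'" using S True Suc F
          by (auto simp: sub_def card_Diff_singleton intro: finite_subset)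
        moreover have "S = insert p (S - {p})" using True by auto
        ultimately show ?thesis by blast
      next
        case False thus ?thesis using S by (auto simp: sub_def)
      qed
    qed
  next
    show "sub F k \<union> insert p ` sub F k' \<subseteq> sub (insert p F) k"
    proof
      fix S assume "S \<in> sub F k \<union> insert p ` sub F k'"
      then consider "S \<in> sub F k" | S' where "S' \<in> sub F k'" "S = insert p S'" by blast
      thus "S \<in> sub (insert p F) k"
      proof cases
        case 1 thus ?thesis by (auto simp: sub_def)
      next
        case 2
        hence "finite S'" "p \<notin> S'" using F p by (auto simp: sub_def intro: finite_subset)
        thus ?thesis using 2 Suc by (auto simp: sub_def)
      qed
    qed
  qed
  have disj: "sub F k \<inter> insert p ` sub F k' = {}" using p by (auto simp: sub_def)
  have inj: "inj_on (insert p) (sub F k')"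
    unfolding inj_on_def sub_def
  proof clarify
    fix A B assume AB: "A \<subseteq> F" "B \<subseteq> F" "insert p A = insert p B"
    have "A = insert p A - {p}" "B = insert p B - {p}" using p AB(1,2) by auto
    thus "A = B" using AB(3) by simp
  qed
  have "sum f (sub (insert p F) k) = sum f (sub F k) + sum f (insert p ` sub F k')"
    unfolding eq using disj F by (intro sum.union_disjoint) (auto simp: finite_sub)
  also have "sum f (insert p ` sub F k') = sum (\<lambda>S. f (insert p S)) (sub F k')"
    using inj by (simp add: sum.reindex)
  finally show ?thesis using Suc by simp
qed

lemma lt_a:
  assumes N: "finite N" and p: "p \<in> N" and S: "S \<subseteq> N - {p}"
  shows "lt t q x y N M S = lt t q x y (N - {p}) M S * (\<Prod>i\<in>S. hf t (y p) (y i))"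
proof -
  have fS: "finite S" using S N by (auto intro: finite_subset)
  have "\<And>i. (\<Prod>j\<in>N-S. hf t (y j) (y i)) = hf t (y p) (y i) * (\<Prod>j\<in>N-{p}-S. hf t (y j) (y i))"
  proof -
    fix i
    have "N - S = insert p (N - {p} - S)" using p S by auto
    thus "(\<Prod>j\<in>N-S. hf t (y j) (y i)) = hf t (y p) (y i) * (\<Prod>j\<in>N-{p}-S. hf t (y j) (y i))"
      using N by (simp add: prod.insert)
  qed
  hence "(\<Prod>i\<in>S. \<Prod>j\<in>N-S. hf t (y j) (y i)) = (\<Prod>i\<in>S. hf t (y p) (y i)) * (\<Prod>i\<in>S. \<Prod>j\<in>N-{p}-S. hf t (y j) (y i))"
    by (simp add: prod.distrib)
  thus ?thesis unfolding lt_def by (simp add: algebra_simps)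
qed

lemma lt_b:
  assumes N: "finite N" and p: "p \<in> N" and S: "S \<subseteq> N - {p}"
  shows "lt t q x y N M (insert p S) = lt t q x y (N - {p}) M S
      * (\<Prod>j\<in>N-{p}-S. hf t (y j) (y p)) * (\<Prod>a\<in>M. hf t (q * y p) (x a))"
proof -
  have fS: "finite S" using S N by (auto intro: finite_subset)
  have pS: "p \<notin> S" using S by auto
  have e: "N - insert p S = N - {p} - S" by auto
  show ?thesis unfolding lt_def e using fS pS by (simp add: prod.insert algebra_simps)
qed

lemma lt_c:
  assumes M: "finite M" and a0: "a0 \<in> M"
  shows "lt t q x y N M S = lt t q x y N (M - {a0}) S * (\<Prod>i\<in>S. hf t (q * y i) (x a0))"
proof -
  have "\<And>i. (\<Prod>a\<in>M. hf t (q * y i) (x a)) = hf t (q * y i) (x a0) * (\<Prod>a\<in>M-{a0}. hf t (q * y i) (x a))"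
    using M a0 by (rule prod.remove)
  thus ?thesis unfolding lt_def by (simp add: prod.distrib algebra_simps)
qed

lemma rt_d:
  assumes M: "finite M" and a0: "a0 \<in> M" and T: "T \<subseteq> M - {a0}"
  shows "rt t q x y N M (insert a0 T) = rt t q x y N (M - {a0}) T
     * (\<Prod>b\<in>M-{a0}-T. hf t (x a0) (x b)) * (\<Prod>j\<in>N. hf t (q * y j) (x a0))"
proof -
  have fT: "finite T" using T M by (auto intro: finite_subset)
  have pT: "a0 \<notin> T" using T by auto
  have e: "M - insert a0 T = M - {a0} - T" by auto
  show ?thesis unfolding rt_def e using fT pT by (simp add: prod.insert algebra_simps)
qed

lemma rt_e:
  assumes N: "finite N" and p: "p \<in> N"
  shows "rt t q x y N M T = rt t q x y (N - {p}) M T * (\<Prod>a\<in>T. hf t (q * y p) (x a))"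
proof -
  have "\<And>a. (\<Prod>j\<in>N. hf t (q * y j) (x a)) = hf t (q * y p) (x a) * (\<Prod>j\<in>N-{p}. hf t (q * y j) (x a))"
    using N p by (rule prod.remove)
  thus ?thesis unfolding rt_def by (simp add: prod.distrib algebra_simps)
qed

lemma Lc_big: "finite N \<Longrightarrow> card N < k \<Longrightarrow> Lc t q x y N M k = 0"
  unfolding Lc_def sub_def
  by (metis (mono_tags, lifting) card_mono empty_Collect_eq leD sum.empty)
lemma Lc_0: "finite N \<Longrightarrow> Lc t q x y N M 0 = 1"
  unfolding Lc_def by (simp add: sub_0 lt_def)
lemma Rc_0: "finite M \<Longrightarrow> Rc t q x y N M 0 = 1"
  unfolding Rc_def by (simp add: sub_0 rt_def)



fun gb :: "complex \<Rightarrow> nat \<Rightarrow> nat \<Rightarrow> complex" where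
  "gb t 0 j = (if j = 0 then 1 else 0)"
| "gb t (Suc N) 0 = 1"
| "gb t (Suc N) (Suc j) = t ^ Suc j * gb t N (Suc j) + gb t N j"

lemma gb_0 [simp]: "gb t N 0 = 1" by (cases N) auto

lemma gb_big: "N < j \<Longrightarrow> gb t N j = 0"
proof (induction N arbitrary: j)
  case 0 thus ?case by simp
next
  case (Suc N) thus ?case by (cases j) auto
qed

definition coef :: "complex \<Rightarrow> nat \<Rightarrow> nat \<Rightarrow> nat \<Rightarrow> nat \<Rightarrow> complex" where
  "coef t n m k k1 = (if k1 \<le> k then t ^ ((k - k1) * (m - k1)) * gb t (n - m) (k - k1) else 0)"

definition RHS where
  "RHS t q x y N M k = (\<Sum>k1\<in>{..card M}. coef t (card N) (card M) k k1 * Rc t q x y N M k1)"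

definition gen :: "complex \<Rightarrow> (nat \<Rightarrow> complex) \<Rightarrow> (nat \<Rightarrow> complex) \<Rightarrow> nat set \<Rightarrow> nat set \<Rightarrow> bool" where
  "gen q x y N M \<longleftrightarrow> q \<noteq> 0 \<and> (\<forall>a\<in>M. x a \<noteq> 0) \<and> (\<forall>j\<in>N. y j \<noteq> 0) \<and> inj_on x M \<and> inj_on y N
     \<and> (\<forall>a\<in>M. \<forall>j\<in>N. q * y j \<noteq> x a)"

lemma hf_inv: "a \<noteq> 0 \<Longrightarrow> b \<noteq> 0 \<Longrightarrow> hf t (1 / b) (1 / a) = hf t a b"
proof -
  assume a: "a \<noteq> 0" and b: "b \<noteq> 0"
  have "1 / b - t * (1 / a) = (a - t * b) / (a * b)" "1 / b - 1 / a = (a - b) / (a * b)"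
    using a b by (simp_all add: field_simps)
  thus ?thesis unfolding hf_def using a b by simp
qed

lemma hf_inv2: "a \<noteq> 0 \<Longrightarrow> b \<noteq> 0 \<Longrightarrow> hf t (q / a) (1 / b) = hf t (q * b) a"
proof -
  assume a: "a \<noteq> 0" and b: "b \<noteq> 0"
  have "q / a - t * (1 / b) = (q * b - t * a) / (a * b)" "q / a - 1 / b = (q * b - a) / (a * b)"
    using a b by (simp_all add: field_simps)
  thus ?thesis unfolding hf_def using a b by simp
qed

lemma hf_scale: "q \<noteq> 0 \<Longrightarrow> hf t b (a / q) = hf t (q * b) a"
proof -
  assume q: "q \<noteq> 0"
  have "b - t * (a / q) = (q * b - t * a) / q" "b - a / q = (q * b - a) / q"
    using q by (simp_all add: field_simps)
  thus ?thesis unfolding hf_def using q by simp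
qed

lemma duality:
  assumes g: "gen q x y N M"
  shows "Rc t q x y N M k = Lc t q (\<lambda>i. 1 / y i) (\<lambda>i. 1 / x i) M N k"
  unfolding Rc_def Lc_def
proof (rule sum.cong[OF refl])
  fix T assume T: "T \<in> sub M k"
  have 1: "(\<Prod>a\<in>T. \<Prod>b\<in>M-T. hf t (x a) (x b)) = (\<Prod>i\<in>T. \<Prod>j\<in>M-T. hf t (1 / x j) (1 / x i))"
    using g T by (intro prod.cong refl) (auto simp: gen_def sub_def hf_inv)
  have 2: "(\<Prod>a\<in>T. \<Prod>j\<in>N. hf t (q * y j) (x a)) = (\<Prod>i\<in>T. \<Prod>a\<in>N. hf t (q * (1 / x i)) (1 / y a))"
    using g T by (intro prod.cong refl) (auto simp: gen_def sub_def hf_inv2)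
  show "rt t q x y N M T = lt t q (\<lambda>i. 1 / y i) (\<lambda>i. 1 / x i) M N T"
    unfolding rt_def lt_def 1 2 ..
qed

lemma gen_dual: "gen q x y N M \<Longrightarrow> gen q (\<lambda>i. 1 / y i) (\<lambda>i. 1 / x i) M N"
proof -
  assume g: "gen q x y N M"
  have A: "q * (1 / x j) \<noteq> 1 / y a" if "a \<in> N" "j \<in> M" for a j
  proof
    assume e: "q * (1 / x j) = 1 / y a"
    have "x j \<noteq> 0" "y a \<noteq> 0" using g that by (auto simp: gen_def)
    hence "q * y a = x j" using e by (simp add: field_simps)
    thus False using g that by (auto simp: gen_def)
  qed
  have B: "inj_on (\<lambda>i. 1 / y i) N" "inj_on (\<lambda>i. 1 / x i) M"
    using g unfolding gen_def inj_on_def by auto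
  show ?thesis using g A B unfolding gen_def by auto
qed

lemma inv_inv_fun: "(\<lambda>i. 1 / (1 / (x::nat\<Rightarrow>complex) i)) = x" by simp

lemma inv_at_inf:
  assumes "filterlim g at_infinity at_infinity"
  shows "((\<lambda>u. inverse (g u - b)) \<longlongrightarrow> (0::complex)) at_infinity"
proof -
  have "filterlim (\<lambda>u. g u + (- b)) at_infinity at_infinity"
    by (rule tendsto_add_filterlim_at_infinity'[OF assms tendsto_const])
  thus ?thesis using filterlim_compose[OF tendsto_inverse_0] by simp
qed

lemma hf_lim_left:
  assumes "filterlim g at_infinity at_infinity"
  shows "((\<lambda>u. hf t (g u) b) \<longlongrightarrow> 1) at_infinity"
proof -
  have "((\<lambda>u. 1 + (b - t * b) * inverse (g u - b)) \<longlongrightarrow> 1 + (b - t*b) * 0) at_infinity"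
    by (intro tendsto_intros inv_at_inf assms)
  moreover have "eventually (\<lambda>u. g u \<noteq> b) at_infinity"
    using assms filterlim_at_infinity_imp_eventually_ne by blast
  hence "eventually (\<lambda>u. 1 + (b - t * b) * inverse (g u - b) = hf t (g u) b) at_infinity"
    by eventually_elim (auto simp: hf_def field_simps)
  ultimately show ?thesis using Lim_transform_eventually by fastforce
qed

lemma hf_lim_right:
  assumes "filterlim g at_infinity at_infinity"
  shows "((\<lambda>u. hf t b (g u)) \<longlongrightarrow> t) at_infinity"
proof -
  have "((\<lambda>u. t - (b - t * b) * inverse (g u - b)) \<longlongrightarrow> t - (b - t*b) * 0) at_infinity"
    by (intro tendsto_intros inv_at_inf assms)
  moreover have "eventually (\<lambda>u. g u \<noteq> b) at_infinity"
    using assms filterlim_at_infinity_imp_eventually_ne by blast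
  hence "eventually (\<lambda>u. t - (b - t * b) * inverse (g u - b) = hf t b (g u)) at_infinity"
  proof eventually_elim
    case (elim u)
    hence "b - g u \<noteq> 0" "g u - b \<noteq> 0" by auto
    thus ?case unfolding hf_def by (simp add: field_simps)
  qed
  ultimately show ?thesis using Lim_transform_eventually by fastforce
qed

lemma filterlim_id_inf: "filterlim (\<lambda>u::complex. u) at_infinity at_infinity"
  by (rule filterlim_ident)

lemma filterlim_mult_inf: "(q::complex) \<noteq> 0 \<Longrightarrow> filterlim (\<lambda>u. q * u) at_infinity at_infinity"
  by (rule tendsto_mult_filterlim_at_infinity[OF tendsto_const _ filterlim_ident])

lemma hf_holo:
  assumes "f holomorphic_on A" "g holomorphic_on A" "\<And>u. u \<in> A \<Longrightarrow> f u \<noteq> g u"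
  shows "(\<lambda>u. hf t (f u) (g u)) holomorphic_on A"
  unfolding hf_def using assms by (intro holomorphic_intros) auto

lemma hf_res1: "u \<noteq> c \<Longrightarrow> (u - c) * hf t u c = u - t * c"
  unfolding hf_def by simp
lemma hf_res2: "u \<noteq> c \<Longrightarrow> (u - c) * hf t c u = - (c - t * u)"
  unfolding hf_def by (simp add: field_simps)
lemma hf_res3: "q \<noteq> 0 \<Longrightarrow> u \<noteq> a / q \<Longrightarrow> (u - a / q) * hf t (q * u) a = (q * u - t * a) / q"
proof -
  assume q: "q \<noteq> 0" and u: "u \<noteq> a / q"
  have e: "u - a / q = (q * u - a) / q" using q by (simp add: field_simps)
  have "q * u - a \<noteq> 0" using u q by (auto simp: field_simps)
  thus ?thesis unfolding hf_def e by simp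
qed
lemma hf_zero_left: "b \<noteq> 0 \<Longrightarrow> hf t 0 b = t" unfolding hf_def by simp
lemma hf_zero_right: "b \<noteq> 0 \<Longrightarrow> hf t b 0 = 1" unfolding hf_def by simp



locale stp =
  fixes t q :: complex and x y :: "nat \<Rightarrow> complex" and N M :: "nat set" and p K :: nat
  assumes finN: "finite N" and finM: "finite M" and pN: "p \<in> N" and g: "gen q x y N M"
begin

lemma q0: "q \<noteq> 0" and x0: "\<And>a. a \<in> M \<Longrightarrow> x a \<noteq> 0" and y0: "\<And>j. j \<in> N \<Longrightarrow> y j \<noteq> 0"
  and injx: "inj_on x M" and injy: "inj_on y N" and qyx: "\<And>a j. a \<in> M \<Longrightarrow> j \<in> N \<Longrightarrow> q * y j \<noteq> x a"
  using g unfolding gen_def by auto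

definition P where "P = y ` (N - {p}) \<union> (\<lambda>a. x a / q) ` M"

definition Lu where "Lu u =
   (\<Sum>S\<in>sub (N-{p}) (Suc K). lt t q x y (N-{p}) M S * (\<Prod>i\<in>S. hf t u (y i)))
 + (\<Sum>S\<in>sub (N-{p}) K. lt t q x y (N-{p}) M S * (\<Prod>j\<in>N-{p}-S. hf t (y j) u) * (\<Prod>a\<in>M. hf t (q*u) (x a)))"

definition Ru where "Ru u = (\<Sum>k1\<in>{..card M}. coef t (card N) (card M) (Suc K) k1 *
   (\<Sum>T\<in>sub M k1. rt t q x y (N-{p}) M T * (\<Prod>a\<in>T. hf t (q*u) (x a))))"

definition Du where "Du u = Lu u - Ru u"

lemma finN': "finite (N - {p})" using finN by simp

lemma sub_fin: "S \<in> sub F k \<Longrightarrow> finite F \<Longrightarrow> finite S"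
  unfolding sub_def by (auto intro: finite_subset)

lemma Lc_eq: "Lc t q x y N M (Suc K) = Lu (y p)"
proof -
  have N: "N = insert p (N - {p})" using pN by auto
  have "Lc t q x y N M (Suc K) = (\<Sum>S\<in>sub (N-{p}) (Suc K). lt t q x y N M S)
      + (\<Sum>S\<in>sub (N-{p}) K. lt t q x y N M (insert p S))"
    unfolding Lc_def by (subst N, subst sub_split) (use finN' in auto)
  also have "\<dots> = Lu (y p)" unfolding Lu_def
    by (intro arg_cong2[where f="(+)"] sum.cong refl)
       (auto simp: sub_def lt_a[OF finN pN] lt_b[OF finN pN])
  finally show ?thesis .
qed

lemma RHS_eq: "RHS t q x y N M (Suc K) = Ru (y p)"
  unfolding RHS_def Ru_def Rc_def
  by (intro sum.cong refl arg_cong2[where f="(*)"]) (simp add: rt_e[OF finN pN])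

lemma finP: "finite P" unfolding P_def using finN finM by auto

lemma yp_notin: "y p \<notin> P"
proof
  assume "y p \<in> P"
  then consider j where "j \<in> N - {p}" "y p = y j" | a where "a \<in> M" "y p = x a / q"
    unfolding P_def by auto
  thus False
  proof cases
    case 1 thus ?thesis using injy pN unfolding inj_on_def by auto
  next
    case 2 thus ?thesis using qyx[OF 2(1) pN] q0 by (auto simp: field_simps)
  qed
qed

lemma zero_notin: "0 \<notin> P"
  unfolding P_def using y0 x0 q0 by auto

lemma avoid_y: "u \<notin> P - C \<Longrightarrow> i \<in> N - {p} \<Longrightarrow> y i \<notin> C \<Longrightarrow> u \<noteq> y i \<and> y i \<noteq> u"
  unfolding P_def by auto

lemma avoid_x: "u \<notin> P - C \<Longrightarrow> a \<in> M \<Longrightarrow> x a / q \<notin> C \<Longrightarrow> q * u \<noteq> x a"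
proof
  assume "u \<notin> P - C" "a \<in> M" "x a / q \<notin> C" "q * u = x a"
  moreover have "u = x a / q" using \<open>q * u = x a\<close> q0 by (simp add: field_simps)
  ultimately show False unfolding P_def by auto
qed

lemma mult_q_eq: "q * u = v \<longleftrightarrow> u = v / q" using q0 by (auto simp: field_simps)

lemma holo: "Du holomorphic_on (UNIV - P)"
  unfolding Du_def[abs_def] Lu_def Ru_def
  by (intro holomorphic_intros hf_holo)
     (auto simp: sub_def P_def mult_q_eq)

lemma lim: "\<exists>l. (Du \<longlongrightarrow> l) at_infinity"
  unfolding Du_def[abs_def] Lu_def Ru_def
  by (rule exI, (rule tendsto_diff tendsto_add tendsto_sum tendsto_mult tendsto_prod tendsto_const
     hf_lim_left hf_lim_right filterlim_id_inf filterlim_mult_inf q0)+)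


lemma sub_mem: "S \<in> sub F k \<Longrightarrow> finite F \<Longrightarrow> S \<subseteq> F \<and> finite S \<and> card S = k"
  unfolding sub_def by (auto intro: finite_subset)

end

context stp begin

lemma res_y:
  assumes i0: "i0 \<in> N - {p}"
  shows "\<exists>H. H holomorphic_on (UNIV - (P - {y i0})) \<and> H (y i0) = 0 \<and>
           (\<forall>u. u \<notin> P \<longrightarrow> (u - y i0) * Du u = H u)"
proof -
  define c where "c = y i0"
  define N2 where "N2 = N - {p} - {i0}"
  define A0 where "A0 u = (\<Sum>S\<in>sub N2 (Suc K). lt t q x y (N-{p}) M S * (\<Prod>i\<in>S. hf t u (y i)))
     + (if K = 0 then 0 else 1) * (\<Sum>S\<in>sub N2 (K-1). lt t q x y (N-{p}) M (insert i0 S)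
          * (\<Prod>j\<in>N-{p}-insert i0 S. hf t (y j) u) * (\<Prod>a\<in>M. hf t (q*u) (x a)))" for u
  define B1 where "B1 u = (\<Sum>S\<in>sub N2 K. lt t q x y (N-{p}) M (insert i0 S) * (\<Prod>i\<in>S. hf t u (y i)))" for u
  define B2 where "B2 u = (\<Sum>S\<in>sub N2 K. lt t q x y (N-{p}) M S * (\<Prod>j\<in>N2-S. hf t (y j) u)
       * (\<Prod>a\<in>M. hf t (q*u) (x a)))" for u
  have N1: "N - {p} = insert i0 N2" using i0 by (auto simp: N2_def)
  have fN2: "finite N2" "i0 \<notin> N2" using finN by (auto simp: N2_def)
  have split: "\<And>f k. sum f (sub (N-{p}) k) = sum f (sub N2 k) +
      (if k = 0 then 0 else sum (\<lambda>S. f (insert i0 S)) (sub N2 (k - 1)))"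
    by (simp only: N1 sub_split[OF fN2])
  have dec: "Lu u = A0 u + hf t u c * B1 u + hf t c u * B2 u" for u
  proof -
    have s1: "(\<Sum>S\<in>sub (N-{p}) (Suc K). lt t q x y (N-{p}) M S * (\<Prod>i\<in>S. hf t u (y i)))
      = (\<Sum>S\<in>sub N2 (Suc K). lt t q x y (N-{p}) M S * (\<Prod>i\<in>S. hf t u (y i))) + hf t u c * B1 u"
    proof -
      have "(\<Sum>S\<in>sub N2 K. lt t q x y (N-{p}) M (insert i0 S) * (\<Prod>i\<in>insert i0 S. hf t u (y i)))
          = hf t u c * B1 u"
        unfolding B1_def sum_distrib_left
      proof (rule sum.cong[OF refl])
        fix S assume "S \<in> sub N2 K"
        hence "finite S" "i0 \<notin> S" using sub_mem[OF _ fN2(1)] fN2(2) by blast+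
        thus "lt t q x y (N-{p}) M (insert i0 S) * (\<Prod>i\<in>insert i0 S. hf t u (y i)) =
            hf t u c * (lt t q x y (N-{p}) M (insert i0 S) * (\<Prod>i\<in>S. hf t u (y i)))"
          by (simp add: c_def)
      qed
      thus ?thesis by (subst split) simp
    qed
    have s2: "(\<Sum>S\<in>sub (N-{p}) K. lt t q x y (N-{p}) M S * (\<Prod>j\<in>N-{p}-S. hf t (y j) u) * (\<Prod>a\<in>M. hf t (q*u) (x a)))
      = hf t c u * B2 u + (if K = 0 then 0 else (\<Sum>S\<in>sub N2 (K-1). lt t q x y (N-{p}) M (insert i0 S)
          * (\<Prod>j\<in>N-{p}-insert i0 S. hf t (y j) u) * (\<Prod>a\<in>M. hf t (q*u) (x a))))"
    proof -
      have "(\<Sum>S\<in>sub N2 K. lt t q x y (N-{p}) M S * (\<Prod>j\<in>N-{p}-S. hf t (y j) u) * (\<Prod>a\<in>M. hf t (q*u) (x a)))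
          = hf t c u * B2 u"
        unfolding B2_def sum_distrib_left
      proof (rule sum.cong[OF refl])
        fix S assume "S \<in> sub N2 K"
        hence S: "S \<subseteq> N2" using sub_mem[OF _ fN2(1)] by blast
        hence e: "N - {p} - S = insert i0 (N2 - S)" using N1 fN2(2) by auto
        have "i0 \<notin> N2 - S" "finite (N2 - S)" using fN2 by auto
        thus "lt t q x y (N-{p}) M S * (\<Prod>j\<in>N-{p}-S. hf t (y j) u) * (\<Prod>a\<in>M. hf t (q*u) (x a)) =
            hf t c u * (lt t q x y (N-{p}) M S * (\<Prod>j\<in>N2-S. hf t (y j) u) * (\<Prod>a\<in>M. hf t (q*u) (x a)))"
          unfolding e by (simp add: c_def)
      qed
      thus ?thesis by (subst split) simp
    qed
    show ?thesis unfolding Lu_def s1 s2 A0_def by (simp add: algebra_simps split: if_split)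
  qed
  define H where "H u = (u - c) * (A0 u - Ru u) + (u - t * c) * B1 u - (c - t * u) * B2 u" for u
  have cP: "c \<in> P" using i0 unfolding P_def c_def by auto
  have eqH: "(u - c) * Du u = H u" if u: "u \<notin> P" for u
  proof -
    have uc: "u \<noteq> c" using u cP by auto
    have "(u - c) * Du u = (u - c) * (A0 u - Ru u) + ((u - c) * hf t u c) * B1 u + ((u - c) * hf t c u) * B2 u"
      unfolding Du_def dec by (simp add: algebra_simps)
    thus ?thesis unfolding H_def hf_res1[OF uc] hf_res2[OF uc] by (simp add: algebra_simps)
  qed
  have yc: "y i \<noteq> c" if "i \<in> N2" for i
    using that injy i0 unfolding c_def N2_def inj_on_def by auto
  have xc: "x a / q \<noteq> c" if "a \<in> M" for a
  proof
    assume "x a / q = c"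
    hence "q * y i0 = x a" using q0 unfolding c_def by (auto simp: field_simps)
    thus False using qyx[OF that] i0 by auto
  qed
  have g1: "u \<noteq> y i" if "S \<in> sub N2 k" "i \<in> S" "u \<in> UNIV - (P - {c})" for S k i u
  proof -
    have "i \<in> N2" using that(1,2) sub_mem[OF _ fN2(1)] by blast
    thus ?thesis using that(3) yc unfolding P_def N2_def by auto
  qed
  have g2: "y j \<noteq> u" if "j \<in> N - {p} - insert i0 S" "u \<in> UNIV - (P - {c})" for j S u
    using that yc unfolding P_def N2_def by auto
  have g5: "y j \<noteq> u" if "j \<in> N2 - S" "u \<in> UNIV - (P - {c})" for j S u
    using that yc unfolding P_def N2_def by auto
  have g3: "q * u \<noteq> x a" if "a \<in> M" "u \<in> UNIV - (P - {c})" for a u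
    using that xc unfolding P_def mult_q_eq by auto
  have g4: "q * u \<noteq> x a" if "T \<in> sub M k" "a \<in> T" "u \<in> UNIV - (P - {c})" for T k a u
  proof -
    have "a \<in> M" using that(1,2) sub_mem[OF _ finM] by blast
    thus ?thesis using g3 that(3) by blast
  qed
  have holH: "H holomorphic_on (UNIV - (P - {c}))"
    unfolding H_def[abs_def] A0_def B1_def B2_def Ru_def
    by (intro holomorphic_intros hf_holo) (rule g1 g2 g3 g4 g5; assumption)+
  have B12: "B1 c = B2 c"
    unfolding B1_def B2_def
  proof (rule sum.cong[OF refl])
    fix S assume "S \<in> sub N2 K"
    hence S: "S \<subseteq> N - {p} - {i0}" using sub_mem[OF _ fN2(1)] unfolding N2_def by blast
    show "lt t q x y (N-{p}) M (insert i0 S) * (\<Prod>i\<in>S. hf t c (y i)) =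
       lt t q x y (N-{p}) M S * (\<Prod>j\<in>N2-S. hf t (y j) c) * (\<Prod>a\<in>M. hf t (q*c) (x a))"
      unfolding lt_b[OF finN' i0 S] lt_a[OF finN' i0 S] N2_def c_def by (simp add: algebra_simps)
  qed
  have "H c = 0" unfolding H_def B12 by (simp add: algebra_simps)
  thus ?thesis using holH eqH unfolding c_def by blast
qed

end

context stp begin

lemma coef_shift: "coef t n (Suc m) (Suc k) (Suc i) = coef t (n - 1) m k i"
proof -
  have "n - Suc m = n - 1 - m" by arith
  thus ?thesis unfolding coef_def by simp
qed

lemma res_x:
  assumes a0: "a0 \<in> M"
    and IH: "Lc t q x y (N-{p}) (M-{a0}) K = RHS t q x y (N-{p}) (M-{a0}) K"
  shows "\<exists>H. H holomorphic_on (UNIV - (P - {x a0 / q})) \<and> H (x a0 / q) = 0 \<and>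
           (\<forall>u. u \<notin> P \<longrightarrow> (u - x a0 / q) * Du u = H u)"
proof -
  define c where "c = x a0 / q"
  define M2 where "M2 = M - {a0}"
  define cf where "cf = coef t (card N) (card M) (Suc K)"
  define al where "al u = (\<Sum>S\<in>sub (N-{p}) (Suc K). lt t q x y (N-{p}) M S * (\<Prod>i\<in>S. hf t u (y i)))" for u
  define B1 where "B1 u = (\<Sum>S\<in>sub (N-{p}) K. lt t q x y (N-{p}) M S * (\<Prod>j\<in>N-{p}-S. hf t (y j) u)
       * (\<Prod>a\<in>M2. hf t (q*u) (x a)))" for u
  define A2 where "A2 u = (\<Sum>k1\<in>{..card M}. cf k1 *
       (\<Sum>T\<in>sub M2 k1. rt t q x y (N-{p}) M T * (\<Prod>a\<in>T. hf t (q*u) (x a))))" for u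
  define B2 where "B2 u = (\<Sum>k1\<in>{..card M}. cf k1 * (if k1 = 0 then 0 else 1) *
       (\<Sum>T\<in>sub M2 (k1 - 1). rt t q x y (N-{p}) M (insert a0 T) * (\<Prod>a\<in>T. hf t (q*u) (x a))))" for u
  have M1: "M = insert a0 M2" using a0 by (auto simp: M2_def)
  have fM2: "finite M2" "a0 \<notin> M2" using finM by (auto simp: M2_def)
  have decL: "Lu u = al u + hf t (q*u) (x a0) * B1 u" for u
  proof -
    have "\<And>S. (\<Prod>a\<in>M. hf t (q*u) (x a)) = hf t (q*u) (x a0) * (\<Prod>a\<in>M2. hf t (q*u) (x a))"
      unfolding M2_def using finM a0 by (rule prod.remove)
    thus ?thesis unfolding Lu_def al_def B1_def sum_distrib_left by (simp add: algebra_simps)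
  qed
  have decR: "Ru u = A2 u + hf t (q*u) (x a0) * B2 u" for u
  proof -
    have "(\<Sum>T\<in>sub M k1. rt t q x y (N-{p}) M T * (\<Prod>a\<in>T. hf t (q*u) (x a))) =
       (\<Sum>T\<in>sub M2 k1. rt t q x y (N-{p}) M T * (\<Prod>a\<in>T. hf t (q*u) (x a))) +
       hf t (q*u) (x a0) * ((if k1 = 0 then 0 else 1) *
       (\<Sum>T\<in>sub M2 (k1 - 1). rt t q x y (N-{p}) M (insert a0 T) * (\<Prod>a\<in>T. hf t (q*u) (x a))))" for k1
    proof -
      have "(\<Sum>T\<in>sub M2 (k1-1). rt t q x y (N-{p}) M (insert a0 T) * (\<Prod>a\<in>insert a0 T. hf t (q*u) (x a)))
         = hf t (q*u) (x a0) * (\<Sum>T\<in>sub M2 (k1 - 1). rt t q x y (N-{p}) M (insert a0 T) * (\<Prod>a\<in>T. hf t (q*u) (x a)))"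
        unfolding sum_distrib_left
      proof (rule sum.cong[OF refl])
        fix T assume "T \<in> sub M2 (k1-1)"
        hence "finite T" "a0 \<notin> T" using sub_mem[OF _ fM2(1)] fM2(2) by blast+
        thus "rt t q x y (N-{p}) M (insert a0 T) * (\<Prod>a\<in>insert a0 T. hf t (q*u) (x a)) =
          hf t (q*u) (x a0) * (rt t q x y (N-{p}) M (insert a0 T) * (\<Prod>a\<in>T. hf t (q*u) (x a)))"
          by simp
      qed
      thus ?thesis by (simp only: M1 sub_split[OF fM2]) (simp add: M1[symmetric] split: if_split)
    qed
    note e = this
    have "Ru u = (\<Sum>k1\<in>{..card M}. cf k1 * (\<Sum>T\<in>sub M2 k1. rt t q x y (N-{p}) M T * (\<Prod>a\<in>T. hf t (q*u) (x a)))
        + hf t (q*u) (x a0) * (cf k1 * (if k1 = 0 then 0 else 1) *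
       (\<Sum>T\<in>sub M2 (k1 - 1). rt t q x y (N-{p}) M (insert a0 T) * (\<Prod>a\<in>T. hf t (q*u) (x a)))))"
      unfolding Ru_def cf_def e by (rule sum.cong[OF refl]) (simp add: algebra_simps)
    also have "\<dots> = A2 u + hf t (q*u) (x a0) * B2 u"
      unfolding A2_def B2_def by (simp only: sum.distrib sum_distrib_left)
    finally show ?thesis .
  qed
  define H where "H u = (u - c) * (al u - A2 u) + ((q * u - t * x a0) / q) * (B1 u - B2 u)" for u
  have cP: "c \<in> P" using a0 unfolding P_def c_def by auto
  have eqH: "(u - c) * Du u = H u" if u: "u \<notin> P" for u
  proof -
    have uc: "u \<noteq> x a0 / q" using u cP c_def by auto
    have "(u - c) * Du u = (u - c) * (al u - A2 u) + ((u - c) * hf t (q*u) (x a0)) * (B1 u - B2 u)"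
      unfolding Du_def decL decR by (simp add: algebra_simps)
    moreover have "(u - c) * hf t (q*u) (x a0) = (q*u - t*x a0)/q" using hf_res3[OF q0 uc] c_def by simp
    ultimately show ?thesis unfolding H_def by simp
  qed
  have yc: "y i \<noteq> c" if "i \<in> N - {p}" for i
  proof
    assume "y i = c"
    hence "q * y i = x a0" using q0 unfolding c_def by (auto simp: field_simps)
    thus False using qyx[OF a0] that by auto
  qed
  have xc: "x a / q \<noteq> c" if "a \<in> M2" for a
  proof
    assume "x a / q = c"
    hence "x a = x a0" using q0 unfolding c_def by (auto simp: field_simps)
    thus False using injx that a0 unfolding inj_on_def M2_def by auto
  qed
  have hy: "u \<noteq> y i \<and> y i \<noteq> u" if "i \<in> N - {p}" "u \<in> UNIV - (P - {c})" for i u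
    using that yc unfolding P_def by auto
  have hy1: "u \<noteq> y i" if "S \<in> sub (N-{p}) k" "i \<in> S" "u \<in> UNIV - (P - {c})" for S k i u
  proof -
    have "i \<in> N - {p}" using that(1,2) sub_mem[OF _ finN'] by blast
    thus ?thesis using hy that(3) by blast
  qed
  have hy2: "y j \<noteq> u" if "j \<in> N - {p} - S" "u \<in> UNIV - (P - {c})" for j S u
    using hy[of j u] that by blast
  have hx: "q * u \<noteq> x a" if "a \<in> M2" "u \<in> UNIV - (P - {c})" for a u
    using that xc unfolding P_def mult_q_eq M2_def by auto
  have hx1: "q * u \<noteq> x a" if "T \<in> sub M2 k" "a \<in> T" "u \<in> UNIV - (P - {c})" for T k a u
  proof -
    have "a \<in> M2" using that(1,2) sub_mem[OF _ fM2(1)] by blast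
    thus ?thesis using hx that(3) by blast
  qed
  have holH: "H holomorphic_on (UNIV - (P - {c}))"
    unfolding H_def[abs_def] al_def A2_def B1_def B2_def
    by (intro holomorphic_intros hf_holo) (rule q0 hy1 hy2 hx hx1; assumption)+
  define h where "h j = hf t (q * y j) (x a0)" for j
  define Pi where "Pi = (\<Prod>a\<in>M2. hf t (x a0) (x a))"
  have qc: "q * c = x a0" unfolding c_def using q0 by simp
  have B1c: "B1 c = (\<Prod>j\<in>N-{p}. h j) * Pi * Lc t q x y (N-{p}) M2 K"
    unfolding B1_def Lc_def sum_distrib_left
  proof (rule sum.cong[OF refl])
    fix S assume "S \<in> sub (N-{p}) K"
    hence S: "S \<subseteq> N - {p}" using sub_mem[OF _ finN'] by blast
    have pr: "(\<Prod>j\<in>N-{p}. h j) = (\<Prod>j\<in>N-{p}-S. h j) * (\<Prod>j\<in>S. h j)"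
      using prod.subset_diff[OF S finN'] .
    have e1: "(\<Prod>j\<in>N-{p}-S. hf t (y j) c) = (\<Prod>j\<in>N-{p}-S. h j)"
      unfolding c_def h_def using hf_scale[OF q0] by simp
    have e2: "lt t q x y (N-{p}) M S = lt t q x y (N-{p}) M2 S * (\<Prod>j\<in>S. h j)"
      unfolding lt_c[OF finM a0] h_def M2_def by (rule refl)
    have e3: "(\<Prod>a\<in>M2. hf t (q*c) (x a)) = Pi" unfolding qc Pi_def by (rule refl)
    show "lt t q x y (N-{p}) M S * (\<Prod>j\<in>N-{p}-S. hf t (y j) c) * (\<Prod>a\<in>M2. hf t (q*c) (x a)) =
        (\<Prod>j\<in>N-{p}. h j) * Pi * lt t q x y (N-{p}) M2 S"
      unfolding e1 e2 e3 pr by (simp add: mult_ac)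
  qed
  have B2c: "B2 c = (\<Prod>j\<in>N-{p}. h j) * Pi * (\<Sum>k1\<in>{..card M}. cf k1 *
      (if k1 = 0 then 0 else Rc t q x y (N-{p}) M2 (k1 - 1)))"
  proof -
  have "B2 c = (\<Sum>k1\<in>{..card M}. (\<Prod>j\<in>N-{p}. h j) * Pi * (cf k1 *
      (if k1 = 0 then 0 else Rc t q x y (N-{p}) M2 (k1 - 1))))"
    unfolding B2_def
  proof (rule sum.cong[OF refl])
    fix k1
    have "(\<Sum>T\<in>sub M2 (k1 - 1). rt t q x y (N-{p}) M (insert a0 T) * (\<Prod>a\<in>T. hf t (q*c) (x a)))
        = (\<Prod>j\<in>N-{p}. h j) * Pi * Rc t q x y (N-{p}) M2 (k1 - 1)"
      unfolding Rc_def sum_distrib_left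
    proof (rule sum.cong[OF refl])
      fix T assume "T \<in> sub M2 (k1 - 1)"
      hence T: "T \<subseteq> M2" using sub_mem[OF _ fM2(1)] by blast
      have pr: "Pi = (\<Prod>b\<in>M2-T. hf t (x a0) (x b)) * (\<Prod>a\<in>T. hf t (x a0) (x a))"
        unfolding Pi_def using prod.subset_diff[OF T fM2(1)] .
      have e1: "rt t q x y (N-{p}) M (insert a0 T) = rt t q x y (N-{p}) M2 T
          * (\<Prod>b\<in>M2-T. hf t (x a0) (x b)) * (\<Prod>j\<in>N-{p}. h j)"
        unfolding rt_d[OF finM a0 T[unfolded M2_def]] h_def M2_def by (rule refl)
      show "rt t q x y (N-{p}) M (insert a0 T) * (\<Prod>a\<in>T. hf t (q*c) (x a)) =
         (\<Prod>j\<in>N-{p}. h j) * Pi * rt t q x y (N-{p}) M2 T"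
        unfolding e1 pr qc by (simp add: mult_ac)
    qed
    thus "cf k1 * (if k1 = 0 then 0 else 1) * (\<Sum>T\<in>sub M2 (k1 - 1). rt t q x y (N-{p}) M (insert a0 T)
          * (\<Prod>a\<in>T. hf t (q*c) (x a))) =
        (\<Prod>j\<in>N-{p}. h j) * Pi * (cf k1 * (if k1 = 0 then 0 else Rc t q x y (N-{p}) M2 (k1 - 1)))"
      by simp
  qed
  thus ?thesis by (simp add: sum_distrib_left)
  qed
  have cardM: "card M = Suc (card M2)" using M1 fM2 by simp
  have cardN: "card (N - {p}) = card N - 1" using finN pN by simp
  have "(\<Sum>k1\<in>{..card M}. cf k1 * (if k1 = 0 then 0 else Rc t q x y (N-{p}) M2 (k1 - 1)))
      = (\<Sum>i\<in>{..card M2}. cf (Suc i) * Rc t q x y (N-{p}) M2 i)"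
    unfolding cardM sum.atMost_Suc_shift by simp
  also have "\<dots> = RHS t q x y (N-{p}) M2 K"
    unfolding RHS_def cf_def cardM coef_shift cardN by (rule refl)
  also have "\<dots> = Lc t q x y (N-{p}) M2 K" using IH unfolding M2_def by simp
  finally have "B1 c = B2 c" unfolding B1c B2c by simp
  hence "H c = 0" unfolding H_def by simp
  thus ?thesis using holH eqH unfolding c_def by blast
qed


end


context stp begin

lemma prod_zero_left: "S \<in> sub (N-{p}) k \<Longrightarrow> (\<Prod>i\<in>S. hf t 0 (y i)) = t ^ k"
proof -
  assume S: "S \<in> sub (N-{p}) k"
  hence S': "S \<subseteq> N - {p}" "card S = k" using sub_mem[OF _ finN'] by auto
  have "(\<Prod>i\<in>S. hf t 0 (y i)) = (\<Prod>i\<in>S. t)"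
    using S' y0 by (intro prod.cong refl hf_zero_left) auto
  thus ?thesis using S' by simp
qed

lemma prod_zero_right: "S \<subseteq> N \<Longrightarrow> (\<Prod>j\<in>S. hf t (y j) 0) = 1"
  using y0 by (intro prod.neutral) (auto simp: hf_zero_right)

lemma prod_zero_x: "T \<in> sub M k \<Longrightarrow> (\<Prod>a\<in>T. hf t 0 (x a)) = t ^ k"
proof -
  assume T: "T \<in> sub M k"
  hence T': "T \<subseteq> M" "card T = k" using sub_mem[OF _ finM] by auto
  have "(\<Prod>a\<in>T. hf t 0 (x a)) = (\<Prod>a\<in>T. t)"
    using T' x0 by (intro prod.cong refl) (auto simp: hf_zero_left)
  thus ?thesis using T' by simp
qed

lemma D0: "Du 0 = t ^ Suc K * Lc t q x y (N-{p}) M (Suc K) + t ^ card M * Lc t q x y (N-{p}) M K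
   - (\<Sum>k1\<in>{..card M}. coef t (card N) (card M) (Suc K) k1 * (t ^ k1 * Rc t q x y (N-{p}) M k1))"
proof -
  have 1: "(\<Sum>S\<in>sub (N-{p}) (Suc K). lt t q x y (N-{p}) M S * (\<Prod>i\<in>S. hf t 0 (y i)))
      = t ^ Suc K * Lc t q x y (N-{p}) M (Suc K)"
    unfolding Lc_def sum_distrib_left by (rule sum.cong[OF refl]) (simp add: prod_zero_left)
  have 2: "(\<Sum>S\<in>sub (N-{p}) K. lt t q x y (N-{p}) M S * (\<Prod>j\<in>N-{p}-S. hf t (y j) 0) * (\<Prod>a\<in>M. hf t (q*0) (x a)))
      = t ^ card M * Lc t q x y (N-{p}) M K"
  proof -
    have "(\<Prod>a\<in>M. hf t (q*0) (x a)) = t ^ card M"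
      using prod_zero_x[of M "card M"] finM by (simp add: sub_def)
    moreover have "(\<Prod>j\<in>N-{p}-S. hf t (y j) 0) = 1" for S
      by (rule prod_zero_right) auto
    ultimately show ?thesis unfolding Lc_def sum_distrib_left by (simp add: mult.commute)
  qed
  have 3: "(\<Sum>T\<in>sub M k1. rt t q x y (N-{p}) M T * (\<Prod>a\<in>T. hf t (q*0) (x a)))
      = t ^ k1 * Rc t q x y (N-{p}) M k1" for k1
    unfolding Rc_def sum_distrib_left by (rule sum.cong[OF refl]) (simp add: prod_zero_x)
  show ?thesis unfolding Du_def Lu_def Ru_def 1 2 3 ..
qed

end

lemma gen_mono: "gen q x y N M \<Longrightarrow> N' \<subseteq> N \<Longrightarrow> M' \<subseteq> M \<Longrightarrow> gen q x y N' M'"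
  unfolding gen_def by (blast intro: inj_on_subset)

lemma sum_single: "finite A \<Longrightarrow> a \<in> A \<Longrightarrow> (\<And>b. b \<in> A \<Longrightarrow> b \<noteq> a \<Longrightarrow> f b = 0) \<Longrightarrow> sum f A = f a"
  by (metis sum.remove sum.neutral DiffE singletonI add.right_neutral)

lemma gb_1_1: "gb t (Suc 0) (Suc 0) = 1" by simp
lemma gb_1_big: "j \<ge> 2 \<Longrightarrow> gb t (Suc 0) j = 0" by (rule gb_big) simp

lemma pascal_coef:
  assumes "m < n" "k1 \<le> m"
  shows "t ^ Suc K * coef t (n-1) m (Suc K) k1 + t ^ m * coef t (n-1) m K k1 = coef t n m (Suc K) k1 * t ^ k1"
proof -
  obtain N0 where N0: "n - m = Suc N0" "n - 1 - m = N0" using assms by (metis Suc_diff_Suc diff_Suc_1 diff_commute)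
  consider "k1 \<le> K" | "k1 = Suc K" | "k1 > Suc K" by linarith
  thus ?thesis
  proof cases
    case 1
    define j where "j = K - k1"
    define d where "d = m - k1"
    have e1: "Suc K - k1 = Suc j" using 1 unfolding j_def by simp
    have e2: "K - k1 = j" unfolding j_def ..
    have e3: "m - k1 = d" unfolding d_def ..
    have K1: "Suc K = k1 + Suc j" using 1 unfolding j_def by simp
    have m1: "m = k1 + d" using assms(2) unfolding d_def by simp
    show ?thesis using 1 unfolding coef_def e1 e2 e3 N0 gb.simps
      by (simp add: K1 m1 power_add algebra_simps)
  next
    case 2 thus ?thesis unfolding coef_def by simp
  next
    case 3 thus ?thesis unfolding coef_def by simp
  qed
qed



lemma coef_single_nn: "coef t n n k k1 = (if k1 = k then 1 else 0)"
  unfolding coef_def by (cases "k1 \<le> k") (auto simp: gb_big)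

lemma dual_coef:
  assumes "Suc K \<le> Suc n'"
  shows "coef t (Suc n') n' (Suc K) k1 * L k1 =
    (if k1 = Suc K then L (Suc K) else 0) + (if k1 = K then t ^ (n' - K) * L K else 0)"
proof -
  consider "k1 = Suc K" | "k1 = K" | "k1 < K" | "k1 > Suc K" by linarith
  thus ?thesis
  proof cases
    case 3
    hence "gb t (Suc n' - n') (Suc K - k1) = 0" by (intro gb_big) auto
    thus ?thesis using 3 unfolding coef_def by simp
  qed (auto simp: coef_def)
qed

theorem mainthm:
  "finite N \<Longrightarrow> finite M \<Longrightarrow> card M \<le> card N \<Longrightarrow> gen q x y N M \<Longrightarrow>
     Lc t q x y N M k = RHS t q x y N M k"
proof (induction "card N + card M" arbitrary: N M x y k rule: less_induct)
  case less
  note IH = less.hyps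
  have finN: "finite N" and finM: "finite M" and cMN: "card M \<le> card N" and g: "gen q x y N M"
    using less.prems by auto
  consider (big) "card N < k" | (zero) "k = 0" | (step) K where "k = Suc K" "Suc K \<le> card N"
    by (cases k; cases "card N < k") (auto simp: not_less)
  thus ?case
  proof cases
    case big
    have "RHS t q x y N M k = 0" unfolding RHS_def
    proof (rule sum.neutral, rule ballI)
      fix k1 assume "k1 \<in> {..card M}"
      hence "k1 \<le> card M" by simp
      hence "coef t (card N) (card M) k k1 = 0" unfolding coef_def using big cMN
        by (auto intro!: gb_big)
      thus "coef t (card N) (card M) k k1 * Rc t q x y N M k1 = 0" by simp
    qed
    thus ?thesis using Lc_big[OF finN big] by simp
  next
    case zero
    have "RHS t q x y N M k = coef t (card N) (card M) 0 0 * Rc t q x y N M 0"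
      unfolding RHS_def zero by (rule sum_single) (auto simp: coef_def)
    thus ?thesis using Lc_0[OF finN] Rc_0[OF finM] zero by (simp add: coef_def)
  next
    case step
    have "N \<noteq> {}" using step(2) by auto
    then obtain p where pN: "p \<in> N" by blast
    interpret S: stp t q x y N M p K using finN finM pN g by unfold_locales
    obtain l where lim: "(S.Du \<longlongrightarrow> l) at_infinity" using S.lim by blast
    have cN': "card (N - {p}) = card N - 1" using finN pN by simp
    have res: "\<exists>H. H holomorphic_on (UNIV - (S.P - {c})) \<and> H c = 0 \<and>
                 (\<forall>u. u \<notin> S.P \<longrightarrow> (u - c) * S.Du u = H u)" if c: "c \<in> S.P" for c
    proof -
      from c consider i0 where "i0 \<in> N - {p}" "c = y i0" | a0 where "a0 \<in> M" "c = x a0 / q"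
        unfolding S.P_def by auto
      thus ?thesis
      proof cases
        case 1 thus ?thesis using S.res_y by blast
      next
        case 2
        have cM': "card (M - {a0}) = card M - 1" using finM 2(1) by simp
        have "card M \<ge> 1" using finM 2(1) by (metis card_0_eq empty_iff less_one not_le)
        hence "Lc t q x y (N-{p}) (M-{a0}) K = RHS t q x y (N-{p}) (M-{a0}) K"
          using cN' cM' cMN finN finM step(2) gen_mono[OF g, of "N-{p}" "M-{a0}"]
          by (intro IH) auto
        thus ?thesis using S.res_x[OF 2(1)] 2(2) by blast
      qed
    qed
    have Dyp: "S.Du (y p) = l" by (rule vanish_lemma[OF S.finP S.holo lim res S.yp_notin])
    have Dz: "S.Du 0 = l" by (rule vanish_lemma[OF S.finP S.holo lim res S.zero_notin])
    have g': "gen q x y (N - {p}) M" using gen_mono[OF g] by blast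
    have D00: "S.Du 0 = 0"
    proof (cases "card M < card N")
      case True
      define L where "L j = Lc t q x y (N-{p}) M j" for j
      define R where "R j = Rc t q x y (N-{p}) M j" for j
      define m where "m = card M"
      define n where "n = card N"
      have IHk: "L j = (\<Sum>k1\<in>{..m}. coef t (n - 1) m j k1 * R k1)" for j
      proof -
        have "Lc t q x y (N-{p}) M j = RHS t q x y (N-{p}) M j"
          using True cN' finN finM step(2) g' by (intro IH) auto
        thus ?thesis unfolding L_def R_def RHS_def cN' m_def n_def .
      qed
      have "S.Du 0 = t ^ Suc K * L (Suc K) + t ^ m * L K - (\<Sum>k1\<in>{..m}. coef t n m (Suc K) k1 * (t ^ k1 * R k1))"
        unfolding S.D0 L_def R_def m_def n_def ..
      also have "\<dots> = (\<Sum>k1\<in>{..m}. (t ^ Suc K * coef t (n - 1) m (Suc K) k1 + t ^ m * coef t (n - 1) m K k1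
             - coef t n m (Suc K) k1 * t ^ k1) * R k1)"
        unfolding IHk sum_distrib_left by (simp add: sum.distrib sum_subtractf algebra_simps)
      also have "\<dots> = 0"
        using pascal_coef[of m n] True unfolding m_def n_def by (intro sum.neutral) auto
      finally show ?thesis .
    next
      case False
      hence mn: "card M = card N" using cMN by simp
      obtain n' where n': "card N = Suc n'" using step(2) by (cases "card N") auto
      define L where "L j = Lc t q x y (N-{p}) M j" for j
      define R where "R j = Rc t q x y (N-{p}) M j" for j
      have cN'': "card (N - {p}) = n'" using cN' n' by simp
      have Kn: "K \<le> n'" using step(2) n' by simp
      have gd: "gen q (\<lambda>i. 1 / y i) (\<lambda>i. 1 / x i) M (N - {p})" using gen_dual[OF g'] .
      have "Lc t q (\<lambda>i. 1 / y i) (\<lambda>i. 1 / x i) M (N-{p}) (Suc K)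
          = RHS t q (\<lambda>i. 1 / y i) (\<lambda>i. 1 / x i) M (N-{p}) (Suc K)"
        using mn n' cN'' finN finM gd by (intro IH) auto
      moreover have "Rc t q (\<lambda>i. 1 / y i) (\<lambda>i. 1 / x i) M (N-{p}) k1 = L k1" for k1
        using duality[OF gd, of t k1] unfolding L_def by simp
      ultimately have "R (Suc K) = (\<Sum>k1\<in>{..n'}. coef t (Suc n') n' (Suc K) k1 * L k1)"
        unfolding R_def duality[OF g'] RHS_def mn n' cN'' by simp
      also have "\<dots> = (\<Sum>k1\<in>{..n'}. (if k1 = Suc K then L (Suc K) else 0) + (if k1 = K then t ^ (n' - K) * L K else 0))"
        using step(2) n' by (intro sum.cong refl dual_coef) auto
      also have "\<dots> = (if Suc K \<le> n' then L (Suc K) else 0) + t ^ (n' - K) * L K"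
        using Kn by (simp add: sum.distrib)
      also have "\<dots> = L (Suc K) + t ^ (n' - K) * L K"
        using Lc_big[of "N - {p}" "Suc K" t q x y M] finN cN'' unfolding L_def by auto
      finally have RS: "R (Suc K) = L (Suc K) + t ^ (n' - K) * L K" .
      have "S.Du 0 = t ^ Suc K * L (Suc K) + t ^ Suc n' * L K - t ^ Suc K * R (Suc K)"
        unfolding S.D0 L_def R_def mn n' coef_single_nn
        using step(2) n' by (simp add: if_distrib[of "\<lambda>z. z * _"] cong: if_cong)
      also have "\<dots> = 0" unfolding RS
      proof -
        have "Suc n' = Suc K + (n' - K)" using Kn by simp
        thus "t ^ Suc K * L (Suc K) + t ^ Suc n' * L K - t ^ Suc K * (L (Suc K) + t ^ (n' - K) * L K) = 0"
          by (simp only: power_add) (simp add: algebra_simps)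
      qed
      finally show ?thesis .
    qed
    have "Lc t q x y N M k = S.Lu (y p)" using S.Lc_eq step(1) by simp
    moreover have "RHS t q x y N M k = S.Ru (y p)" using S.RHS_eq step(1) by simp
    ultimately show ?thesis using Dyp Dz D00 unfolding S.Du_def by simp
  qed
qed



lemma hirz_hf: "a \<noteq> 0 \<Longrightarrow> b \<noteq> 0 \<Longrightarrow> hirz_factor t (a / b) = hf t a b"
proof -
  assume a: "a \<noteq> 0" and b: "b \<noteq> 0"
  have "1 - t / (a / b) = (a - t * b) / a" "1 - 1 / (a / b) = (a - b) / a"
    using a b by (simp_all add: field_simps)
  thus ?thesis unfolding hirz_factor_def hf_def using a by simp
qed

lemma prod_mset_pairs:
  "finite A \<Longrightarrow> finite B \<Longrightarrow> prod_mset (image_mset h (image_mset (\<lambda>(i, j). f i j) (mset_set (A \<times> B))))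
     = (\<Prod>i\<in>A. \<Prod>j\<in>B. h (f i j))"
  by (simp add: multiset.map_comp prod_unfold_prod_mset[symmetric] prod.cartesian_product case_prod_beta comp_def)

lemma sub_mem': "S \<in> sub F k \<Longrightarrow> finite F \<Longrightarrow> S \<subseteq> F \<and> finite S \<and> card S = k"
  unfolding sub_def by (auto intro: finite_subset)

lemma gen_gp: "generic_point n m q x y \<Longrightarrow> gen q x y {..<n} {..<m}"
  unfolding generic_point_def gen_def by auto

lemma chiX_Lc:
  assumes gp: "generic_point n m q x y"
  shows "chiX k n m t q x y = Lc t q x y {..<n} {..<m} k"
  unfolding chiX_def loc_genus_def Lc_def
proof (rule sum.cong)
  show "fixX k n = sub {..<n} k" unfolding fixX_def sub_def ..
next
  fix S assume "S \<in> sub {..<n} k"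
  hence S: "S \<subseteq> {..<n}" "finite S" using sub_mem'[of S "{..<n}" k] by auto
  have g: "q \<noteq> 0" "\<And>a. a < m \<Longrightarrow> x a \<noteq> 0" "\<And>j. j < n \<Longrightarrow> y j \<noteq> 0"
    using gp unfolding generic_point_def by auto
  have 1: "(\<Prod>i\<in>S. \<Prod>j\<in>{..<n} - S. hirz_factor t (y j / y i)) = (\<Prod>i\<in>S. \<Prod>j\<in>{..<n} - S. hf t (y j) (y i))"
    using S g by (intro prod.cong refl hirz_hf) auto
  have 2: "(\<Prod>i\<in>S. \<Prod>a\<in>{..<m}. hirz_factor t (q * y i / x a)) = (\<Prod>i\<in>S. \<Prod>a\<in>{..<m}. hf t (q * y i) (x a))"
    using S g by (intro prod.cong refl hirz_hf) auto
  show "prod_mset (image_mset (hirz_factor t) (tangX n m q x y S)) = lt t q x y {..<n} {..<m} S"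
    unfolding tangX_def lt_def image_mset_union prod_mset.union
    using S 1 2 by (simp add: prod_mset_pairs)
qed

lemma chiXv_Rc:
  assumes gp: "generic_point n m q x y"
  shows "chiXv k n m t q x y = Rc t q x y {..<n} {..<m} k"
  unfolding chiXv_def loc_genus_def Rc_def
proof (rule sum.cong)
  show "fixXv k m = sub {..<m} k" unfolding fixXv_def sub_def ..
next
  fix S assume "S \<in> sub {..<m} k"
  hence S: "S \<subseteq> {..<m}" "finite S" using sub_mem'[of S "{..<m}" k] by auto
  have g: "q \<noteq> 0" "\<And>a. a < m \<Longrightarrow> x a \<noteq> 0" "\<And>j. j < n \<Longrightarrow> y j \<noteq> 0"
    using gp unfolding generic_point_def by auto
  have 1: "(\<Prod>a\<in>S. \<Prod>b\<in>{..<m} - S. hirz_factor t (x a / x b)) = (\<Prod>a\<in>S. \<Prod>b\<in>{..<m} - S. hf t (x a) (x b))"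
    using S g by (intro prod.cong refl hirz_hf) auto
  have 2: "(\<Prod>a\<in>S. \<Prod>j\<in>{..<n}. hirz_factor t (q * y j / x a)) = (\<Prod>a\<in>S. \<Prod>j\<in>{..<n}. hf t (q * y j) (x a))"
    using S g by (intro prod.cong refl hirz_hf) auto
  show "prod_mset (image_mset (hirz_factor t) (tangXv n m q x y S)) = rt t q x y {..<n} {..<m} S"
    unfolding tangXv_def rt_def image_mset_union prod_mset.union
    using S 1 2 by (simp add: prod_mset_pairs)
qed



lemma powi_comb: "(s::complex) \<noteq> 0 \<Longrightarrow> a + b = c + d \<Longrightarrow> s powi a * s powi b = s powi c * s powi d"
  by (simp add: power_int_add[symmetric])

lemma cw_sub: "char_wedge_rho j N s = (\<Sum>A\<in>sub {..<N} j. \<Prod>i\<in>A. s powi (int N - 1 - 2 * int i))"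
  unfolding char_wedge_rho_def sub_def ..

lemma cw_step:
  assumes s: "s \<noteq> 0"
  shows "char_wedge_rho (Suc j) (Suc N) s =
     s ^ Suc j * char_wedge_rho (Suc j) N s + s powi (- int N) * s ^ j * char_wedge_rho j N s"
proof -
  have fin: "finite {..<N}" "N \<notin> {..<N}" by auto
  have ins: "{..<Suc N} = insert N {..<N}" by auto
  have t1: "(\<Prod>i\<in>A. s powi (int (Suc N) - 1 - 2 * int i)) = s ^ k * (\<Prod>i\<in>A. s powi (int N - 1 - 2 * int i))"
    if "A \<in> sub {..<N} k" for A k
  proof -
    have A: "finite A" "card A = k" using that sub_mem'[of A "{..<N}" k] by auto
    have "(\<Prod>i\<in>A. s powi (int (Suc N) - 1 - 2 * int i)) = (\<Prod>i\<in>A. s * s powi (int N - 1 - 2 * int i))"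
    proof (rule prod.cong[OF refl])
      fix i
      have "int (Suc N) - 1 - 2 * int i = 1 + (int N - 1 - 2 * int i)" by simp
      hence "s powi (int (Suc N) - 1 - 2 * int i) = s powi (1 + (int N - 1 - 2 * int i))" by (rule arg_cong)
      also have "\<dots> = s * s powi (int N - 1 - 2 * int i)" using s power_int_add[of s 1 "int N - 1 - 2 * int i"] by simp
      finally show "s powi (int (Suc N) - 1 - 2 * int i) = s * s powi (int N - 1 - 2 * int i)" .
    qed
    thus ?thesis using A by (simp add: prod.distrib)
  qed
  have t2: "(\<Prod>i\<in>insert N A. s powi (int (Suc N) - 1 - 2 * int i)) =
       s powi (- int N) * s ^ k * (\<Prod>i\<in>A. s powi (int N - 1 - 2 * int i))"
    if "A \<in> sub {..<N} k" for A k
  proof -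
    have A: "finite A" "N \<notin> A" using that sub_mem'[of A "{..<N}" k] by auto
    have "int (Suc N) - 1 - 2 * int N = - int N" by simp
    thus ?thesis using A t1[OF that] by simp
  qed
  have h1: "(\<Sum>A\<in>sub {..<N} (Suc j). \<Prod>i\<in>A. s powi (int (Suc N) - 1 - 2 * int i))
     = s ^ Suc j * (\<Sum>A\<in>sub {..<N} (Suc j). \<Prod>i\<in>A. s powi (int N - 1 - 2 * int i))"
    unfolding sum_distrib_left by (rule sum.cong[OF refl]) (rule t1)
  have h2: "(\<Sum>A\<in>sub {..<N} j. \<Prod>i\<in>insert N A. s powi (int (Suc N) - 1 - 2 * int i))
     = s powi (- int N) * s ^ j * (\<Sum>A\<in>sub {..<N} j. \<Prod>i\<in>A. s powi (int N - 1 - 2 * int i))"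
    unfolding sum_distrib_left by (rule sum.cong[OF refl]) (rule t2)
  have "char_wedge_rho (Suc j) (Suc N) s =
      (\<Sum>A\<in>sub {..<N} (Suc j). \<Prod>i\<in>A. s powi (int (Suc N) - 1 - 2 * int i))
    + (\<Sum>A\<in>sub {..<N} j. \<Prod>i\<in>insert N A. s powi (int (Suc N) - 1 - 2 * int i))"
    unfolding cw_sub ins sub_split[OF fin] by simp
  thus ?thesis unfolding h1 h2 cw_sub .
qed

lemma cw_gb: "(s::complex) \<noteq> 0 \<Longrightarrow> s powi (int j * (int N - int j)) * char_wedge_rho j N s = gb (s^2) N j"
proof (induction N arbitrary: j)
  case 0
  have "sub {..<0::nat} j = (if j = 0 then {{}} else {})" unfolding sub_def by auto
  thus ?case unfolding cw_sub by simp
next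
  case (Suc N)
  note s = Suc.prems
  show ?case
  proof (cases j)
    case 0
    have "sub {..<Suc N} 0 = {{}}" by (rule sub_0) simp
    thus ?thesis unfolding 0 cw_sub by simp
  next
    case (Suc j')
    have IH1: "s powi (int (Suc j') * (int N - int (Suc j'))) * char_wedge_rho (Suc j') N s = gb (s^2) N (Suc j')"
      using Suc.IH[OF s] .
    have IH0: "s powi (int j' * (int N - int j')) * char_wedge_rho j' N s = gb (s^2) N j'"
      using Suc.IH[OF s] .
    define e where "e = int (Suc j') * (int (Suc N) - int (Suc j'))"
    have X1: "s powi e * s ^ Suc j' = (s^2) ^ Suc j' * s powi (int (Suc j') * (int N - int (Suc j')))"
    proof -
      have "s powi e * s powi int (Suc j') = s powi (2 * int (Suc j')) * s powi (int (Suc j') * (int N - int (Suc j')))"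
        by (rule powi_comb[OF s]) (simp add: e_def algebra_simps)
      moreover have "s powi (2 * int (Suc j')) = (s^2) ^ Suc j'"
      proof -
        have ii: "int (2 * Suc j') = 2 * int (Suc j')" by simp
        have "(s^2) ^ Suc j' = s ^ (2 * Suc j')" by (rule power_mult[symmetric])
        also have "\<dots> = s powi int (2 * Suc j')" by (rule power_int_of_nat[symmetric])
        finally show ?thesis unfolding ii by (rule sym)
      qed
      moreover have "s ^ Suc j' = s powi int (Suc j')" by (rule power_int_of_nat[symmetric])
      ultimately show ?thesis by (simp only:)
    qed
    have X0: "s powi e * (s powi (- int N) * s ^ j') = s powi (int j' * (int N - int j'))"
    proof -
      have "s powi e * s powi (- int N + int j') = s powi (int j' * (int N - int j')) * s powi 0"
        by (rule powi_comb[OF s]) (simp add: e_def algebra_simps)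
      moreover have "s powi (- int N + int j') = s powi (- int N) * s ^ j'"
        using s power_int_add[of s "- int N" "int j'"] by (simp only: power_int_of_nat) simp
      ultimately show ?thesis by simp
    qed
    have "s powi e * char_wedge_rho (Suc j') (Suc N) s =
        (s powi e * s ^ Suc j') * char_wedge_rho (Suc j') N s + (s powi e * (s powi (- int N) * s ^ j')) * char_wedge_rho j' N s"
      unfolding cw_step[OF s] by (simp add: algebra_simps)
    also have "\<dots> = (s^2) ^ Suc j' * gb (s^2) N (Suc j') + gb (s^2) N j'"
      unfolding X1 X0 IH0[symmetric] IH1[symmetric] by (simp add: algebra_simps)
    finally show ?thesis unfolding Suc e_def by simp
  qed
qed



theorem theorem2p6:
  fixes k n m :: nat and s q :: complex and x y :: "nat \<Rightarrow> complex"
  assumes "m < n" and "1 \<le> k" and "k \<le> n"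
    and "s \<noteq> 0" and "generic_point n m q x y"
  shows "chiX k n m (s^2) q x y =
    (\<Sum>k1\<in>{0..min k m}. let k2 = k - k1 in
        s powi (2 * int k2 * (int m - int k1) + int k2 * (int n - int m - int k2))
        * char_wedge_rho k2 (n - m) s
        * chiXv k1 n m (s^2) q x y)"
proof -
  note mn = assms(1) and s = assms(4) and gp = assms(5)
  have g: "gen q x y {..<n} {..<m}" using gen_gp[OF gp] .
  have "chiX k n m (s^2) q x y = Lc (s^2) q x y {..<n} {..<m} k" by (rule chiX_Lc[OF gp])
  also have "\<dots> = RHS (s^2) q x y {..<n} {..<m} k"
    using mn g by (intro mainthm) auto
  also have "\<dots> = (\<Sum>k1\<in>{..m}. coef (s^2) n m k k1 * Rc (s^2) q x y {..<n} {..<m} k1)"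
    unfolding RHS_def by simp
  also have "\<dots> = (\<Sum>k1\<in>{0..min k m}. coef (s^2) n m k k1 * Rc (s^2) q x y {..<n} {..<m} k1)"
    by (rule sum.mono_neutral_right) (auto simp: coef_def)
  also have "\<dots> = (\<Sum>k1\<in>{0..min k m}. let k2 = k - k1 in
        s powi (2 * int k2 * (int m - int k1) + int k2 * (int n - int m - int k2))
        * char_wedge_rho k2 (n - m) s
        * chiXv k1 n m (s^2) q x y)"
  proof (rule sum.cong[OF refl])
    fix k1 assume "k1 \<in> {0..min k m}"
    hence k1: "k1 \<le> k" "k1 \<le> m" by auto
    define k2 where "k2 = k - k1"
    have e1: "int m - int k1 = int (m - k1)" using k1 by simp
    have e2: "int n - int m - int k2 = int (n - m) - int k2" using mn by simp
    have pw: "s powi (2 * int k2 * (int m - int k1) + int k2 * (int n - int m - int k2))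
        = (s^2) ^ (k2 * (m - k1)) * s powi (int k2 * (int (n - m) - int k2))"
    proof -
      have "s powi (2 * int k2 * (int m - int k1) + int k2 * (int n - int m - int k2))
          = s powi (int (2 * (k2 * (m - k1)))) * s powi (int k2 * (int (n - m) - int k2))"
        unfolding e1 e2 using s by (simp add: power_int_add mult.assoc)
      also have "s powi (int (2 * (k2 * (m - k1)))) = (s^2) ^ (k2 * (m - k1))"
        unfolding power_int_of_nat by (rule power_mult)
      finally show ?thesis .
    qed
    have "coef (s^2) n m k k1 * Rc (s^2) q x y {..<n} {..<m} k1 =
       s powi (2 * int k2 * (int m - int k1) + int k2 * (int n - int m - int k2))
        * char_wedge_rho k2 (n - m) s * chiXv k1 n m (s^2) q x y"
      unfolding pw chiXv_Rc[OF gp] coef_def k2_def[symmetric] using k1 cw_gb[OF s, of k2 "n - m"]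
      by (simp add: mult.assoc)
    thus "coef (s^2) n m k k1 * Rc (s^2) q x y {..<n} {..<m} k1 =
       (let k2 = k - k1 in s powi (2 * int k2 * (int m - int k1) + int k2 * (int n - int m - int k2))
        * char_wedge_rho k2 (n - m) s * chiXv k1 n m (s^2) q x y)"
      unfolding k2_def Let_def .
  qed
  finally show ?thesis .
qed


end
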